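(* Let $N$ be a tree-based network. Then $|Sup(N)|$ equals the number of supporting sets for $\mathcal{J}_N$.
   Context: A phylogenetic network on a nonempty finite set $X$ is a rooted acyclic digraph with no parallel arcs such that: the unique root has out-degree at least one; $X$ is exactly the set of vertices of out-degree zero (leaves), each of in-degree one; every other vertex either has in-degree one and out-degree at least two (a tree vertex) or in-degree at least two and out-degree one (a reticulation). If $|X|=1$, the network may also consist of the single vertex in $X$. An omnian is a non-leaf vertex all of whose children are reticulations. $N$ is tree-based if it has a spanning tree rooted at the root of $N$ all of whose leaves lie in $X$; a support tree for $N$ is such a spanning tree, i.e., a subgraph of $N$ containing all vertices of $N$ that is a directed tree rooted at the root of $N$ whose leaf set is exactly $X$. $Sup(N)$ denotes the set of support trees for $N$ (distinguished by their arc sets). Let $R_t$ be the set of reticulations of $N$ with no reticulation parent, and $Q_t$ the set of vertices of $N$ having a child in $R_t$. $\mathcal{J}_N$ is the bipartite graph with vertex bipartition $\{Q_t,R_t\}$ and an edge $\{q,r\}$ for each arc $(q,r)$ of $N$ with $q\in Q_t$, $r\in R_t$. A supporting set for $\mathcal{J}_N$ is a set $E$ of edges of $\mathcal{J}_N$ such that each omnian in $Q_t$ is incident with at least one edge of $E$ and each vertex of $R_t$ is incident with exactly one edge of $E$. *)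

theory Defs
  imports Main
begin

text \<open>A directed graph is given by a vertex set V and an arc set A of ordered pairs
(so there are no parallel arcs by construction).\<close>

definition indeg :: "('v \<times> 'v) set \<Rightarrow> 'v \<Rightarrow> nat" where
  "indeg A v = card {u. (u, v) \<in> A}"

definition outdeg :: "('v \<times> 'v) set \<Rightarrow> 'v \<Rightarrow> nat" where
  "outdeg A v = card {w. (v, w) \<in> A}"

definition net_root :: "'v set \<Rightarrow> ('v \<times> 'v) set \<Rightarrow> 'v" where
  "net_root V A = (THE r. r \<in> V \<and> indeg A r = 0)"

definition phylo_net :: "'v set \<Rightarrow> ('v \<times> 'v) set \<Rightarrow> 'v set \<Rightarrow> bool" where
  "phylo_net V A X \<longleftrightarrow>
     finite V \<and> A \<subseteq> V \<times> V \<and> X \<noteq> {} \<and> X \<subseteq> V \<and> acyclic A \<and>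
     (\<exists>!r. r \<in> V \<and> indeg A r = 0) \<and>
     (\<forall>v\<in>V. (net_root V A, v) \<in> A\<^sup>*) \<and>
     ((card X = 1 \<and> V = X \<and> A = {}) \<or>
      (outdeg A (net_root V A) \<ge> 1 \<and>
       X = {v \<in> V. outdeg A v = 0} \<and>
       (\<forall>x\<in>X. indeg A x = 1) \<and>
       (\<forall>v\<in>V - X - {net_root V A}.
          (indeg A v = 1 \<and> outdeg A v \<ge> 2) \<or> (indeg A v \<ge> 2 \<and> outdeg A v = 1))))"

definition reticulation :: "'v set \<Rightarrow> ('v \<times> 'v) set \<Rightarrow> 'v \<Rightarrow> bool" where
  "reticulation V A v \<longleftrightarrow> v \<in> V \<and> indeg A v \<ge> 2 \<and> outdeg A v = 1"

definition omnian :: "'v set \<Rightarrow> ('v \<times> 'v) set \<Rightarrow> 'v set \<Rightarrow> 'v \<Rightarrow> bool" where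
  "omnian V A X v \<longleftrightarrow> v \<in> V \<and> v \<notin> X \<and> (\<forall>c. (v, c) \<in> A \<longrightarrow> reticulation V A c)"

definition support_tree :: "'v set \<Rightarrow> ('v \<times> 'v) set \<Rightarrow> 'v set \<Rightarrow> ('v \<times> 'v) set \<Rightarrow> bool" where
  "support_tree V A X T \<longleftrightarrow>
     T \<subseteq> A \<and>
     indeg T (net_root V A) = 0 \<and>
     (\<forall>v\<in>V - {net_root V A}. indeg T v = 1) \<and>
     (\<forall>v\<in>V. (net_root V A, v) \<in> T\<^sup>*) \<and>
     {v \<in> V. outdeg T v = 0} = X"

definition SupTrees :: "'v set \<Rightarrow> ('v \<times> 'v) set \<Rightarrow> 'v set \<Rightarrow> ('v \<times> 'v) set set" where
  "SupTrees V A X = {T. support_tree V A X T}"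

definition tree_based :: "'v set \<Rightarrow> ('v \<times> 'v) set \<Rightarrow> 'v set \<Rightarrow> bool" where
  "tree_based V A X \<longleftrightarrow> (\<exists>T. support_tree V A X T)"

definition R_t :: "'v set \<Rightarrow> ('v \<times> 'v) set \<Rightarrow> 'v set" where
  "R_t V A = {r. reticulation V A r \<and> \<not> (\<exists>p. (p, r) \<in> A \<and> reticulation V A p)}"

definition Q_t :: "'v set \<Rightarrow> ('v \<times> 'v) set \<Rightarrow> 'v set" where
  "Q_t V A = {q \<in> V. \<exists>r \<in> R_t V A. (q, r) \<in> A}"

definition J_edges :: "'v set \<Rightarrow> ('v \<times> 'v) set \<Rightarrow> 'v set set" where
  "J_edges V A = {{q, r} | q r. (q, r) \<in> A \<and> q \<in> Q_t V A \<and> r \<in> R_t V A}"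

definition supporting_set :: "'v set \<Rightarrow> ('v \<times> 'v) set \<Rightarrow> 'v set \<Rightarrow> 'v set set \<Rightarrow> bool" where
  "supporting_set V A X E \<longleftrightarrow>
     E \<subseteq> J_edges V A \<and>
     (\<forall>q \<in> Q_t V A. omnian V A X q \<longrightarrow> (\<exists>e \<in> E. q \<in> e)) \<and>
     (\<forall>r \<in> R_t V A. card {e \<in> E. r \<in> e} = 1)"

end

theory Submission
  imports Defs
begin

lemma fin_in: "finite A \<Longrightarrow> finite {u. (u, v) \<in> A}"
  by (rule finite_subset[of _ "fst ` A"]) force+

lemma fin_out: "finite A \<Longrightarrow> finite {w. (v, w) \<in> A}"
  by (rule finite_subset[of _ "snd ` A"]) force+

lemma sing_iff: "{u. P u} = {z} \<Longrightarrow> P x = (x = z)"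
  by (metis mem_Collect_eq singleton_iff)

lemma pn_basic:
  assumes "phylo_net V A X"
  shows "finite V" "A \<subseteq> V \<times> V" "finite A" "X \<subseteq> V" "acyclic A"
    "net_root V A \<in> V" "indeg A (net_root V A) = 0"
proof -
  show f: "finite V" and s: "A \<subseteq> V \<times> V" "X \<subseteq> V" "acyclic A"
    using assms unfolding phylo_net_def by auto
  show "finite A" using f s(1) finite_subset by blast
  have "\<exists>!r. r \<in> V \<and> indeg A r = 0" using assms unfolding phylo_net_def by auto
  then have "net_root V A \<in> V \<and> indeg A (net_root V A) = 0"
    unfolding net_root_def by (rule theI')
  then show "net_root V A \<in> V" "indeg A (net_root V A) = 0" by auto
qed

lemma indeg_pos: assumes "finite A" "(u,v) \<in> A" shows "indeg A v \<noteq> 0"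
  unfolding indeg_def using fin_in[OF assms(1), of v] assms(2) by (simp add: card_eq_0_iff) blast

lemma outdeg_pos: assumes "finite A" "(v,w) \<in> A" shows "outdeg A v \<noteq> 0"
  unfolding outdeg_def using fin_out[OF assms(1), of v] assms(2) by (simp add: card_eq_0_iff) blast

lemma root_noin:
  assumes "phylo_net V A X" shows "(u, net_root V A) \<notin> A"
  using indeg_pos[OF pn_basic(3)[OF assms]] pn_basic(7)[OF assms] by blast

lemma noloop:
  assumes "phylo_net V A X" shows "(v, v) \<notin> A"
  using assms unfolding acyclic_def phylo_net_def by auto

lemma pn_cases0:
  assumes "phylo_net V A X"
  shows "(card X = 1 \<and> V = X \<and> A = {}) \<or>
      (outdeg A (net_root V A) \<ge> 1 \<and>
       X = {v \<in> V. outdeg A v = 0} \<and> (\<forall>x\<in>X. indeg A x = 1) \<and>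
       (\<forall>v\<in>V - X - {net_root V A}.
          (indeg A v = 1 \<and> outdeg A v \<ge> 2) \<or> (indeg A v \<ge> 2 \<and> outdeg A v = 1)))"
  using assms[unfolded phylo_net_def] by (elim conjE) assumption

lemma pn_cases:
  assumes "phylo_net V A X"
  shows "(card X = 1 \<and> V = X \<and> A = {}) \<or>
      (X = {v \<in> V. outdeg A v = 0} \<and> (\<forall>x\<in>X. indeg A x = 1) \<and>
       (\<forall>v\<in>V - X - {net_root V A}.
          (indeg A v = 1 \<and> outdeg A v \<ge> 2) \<or> (indeg A v \<ge> 2 \<and> outdeg A v = 1)))"
  using pn_cases0[OF assms] by (elim disjE conjE) simp_all

lemma X_out:
  assumes "phylo_net V A X" "x \<in> X" shows "(x, w) \<notin> A"
proof
  assume h: "(x, w) \<in> A"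
  have o: "outdeg A x \<noteq> 0" by (rule outdeg_pos[OF pn_basic(3)[OF assms(1)] h])
  have "A \<noteq> {}" using h by auto
  then have "X = {v \<in> V. outdeg A v = 0}" using pn_cases[OF assms(1)] by (elim disjE conjE) simp_all
  then have "outdeg A x = 0" using assms(2) by (metis (mono_tags, lifting) mem_Collect_eq)
  then show False using o by simp
qed

lemma indeg1:
  assumes "phylo_net V A X" "v \<in> V" "v \<noteq> net_root V A" "\<not> reticulation V A v"
  shows "indeg A v = 1"
proof -
  have r: "net_root V A \<in> V" using pn_basic[OF assms(1)] by auto
  show ?thesis
  proof (cases "card X = 1 \<and> V = X \<and> A = {}")
    case True
    then obtain x where "V = {x}" by (metis card_1_singletonE)
    then show ?thesis using r assms(2,3) by auto
  next
    case False
    then have D: "X = {v \<in> V. outdeg A v = 0}" "\<forall>x\<in>X. indeg A x = 1"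
      "\<forall>v\<in>V - X - {net_root V A}.
          (indeg A v = 1 \<and> outdeg A v \<ge> 2) \<or> (indeg A v \<ge> 2 \<and> outdeg A v = 1)"
      using pn_cases[OF assms(1)] by blast+
    show ?thesis
    proof (cases "v \<in> X")
      case True then show ?thesis using D(2) by blast
    next
      case False
      then have "(indeg A v = 1 \<and> outdeg A v \<ge> 2) \<or> (indeg A v \<ge> 2 \<and> outdeg A v = 1)"
        using D(3) assms(2,3) by blast
      then show ?thesis using assms(2,4) unfolding reticulation_def by blast
    qed
  qed
qed

lemma nonX_out:
  assumes "phylo_net V A X" "v \<in> V" "v \<notin> X" shows "\<exists>w. (v, w) \<in> A"
proof (cases "card X = 1 \<and> V = X \<and> A = {}")
  case True then show ?thesis using assms by blast
next
  case False
  then have "X = {v \<in> V. outdeg A v = 0}" using pn_cases[OF assms(1)] by blast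
  then have "outdeg A v \<noteq> 0" using assms(2,3) by (metis (mono_tags, lifting) mem_Collect_eq)
  then have "{w. (v, w) \<in> A} \<noteq> {}" unfolding outdeg_def by (metis card.empty)
  then show ?thesis by blast
qed

lemma ret_out:
  assumes "reticulation V A p" "(p, v) \<in> A" "(p, w) \<in> A" shows "w = v"
proof -
  have "card {w. (p, w) \<in> A} = 1" using assms unfolding reticulation_def outdeg_def by auto
  then obtain z where z: "{w. (p, w) \<in> A} = {z}" using card_1_singletonE by blast
  have "v \<in> {w. (p, w) \<in> A}" "w \<in> {w. (p, w) \<in> A}" using assms by auto
  then show ?thesis unfolding z by simp
qed

lemma ret_notX:
  assumes "phylo_net V A X" "reticulation V A v" shows "v \<notin> X"
proof
  assume "v \<in> X"
  then have "{w. (v, w) \<in> A} = {}" using X_out[OF assms(1)] by auto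
  then show False using assms(2) unfolding reticulation_def outdeg_def by auto
qed

lemma ret_notroot:
  assumes "phylo_net V A X" "reticulation V A v" shows "v \<noteq> net_root V A"
  using assms pn_basic(7)[OF assms(1)] unfolding reticulation_def by auto

lemma R_ret: "r \<in> R_t V A \<Longrightarrow> reticulation V A r"
  unfolding R_t_def by auto

lemma Q_notret: "q \<in> Q_t V A \<Longrightarrow> \<not> reticulation V A q"
  unfolding Q_t_def R_t_def by auto

lemma notR_par:
  assumes "reticulation V A v" "v \<notin> R_t V A"
  obtains p where "(p, v) \<in> A" "reticulation V A p"
  using assms unfolding R_t_def by auto

lemma ST_in:
  assumes "support_tree V A X T" "v \<in> V" "v \<noteq> net_root V A"
  shows "\<exists>!u. (u, v) \<in> T"
proof -
  have "card {u. (u, v) \<in> T} = 1" using assms unfolding support_tree_def indeg_def by auto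
  then obtain z where "{u. (u, v) \<in> T} = {z}" using card_1_singletonE by blast
  then show ?thesis using sing_iff[of "\<lambda>u. (u, v) \<in> T"] by metis
qed

lemma ST_out:
  assumes "phylo_net V A X" "support_tree V A X T" "v \<in> V" "v \<notin> X"
  shows "\<exists>w. (v, w) \<in> T"
proof -
  have "outdeg T v \<noteq> 0" using assms unfolding support_tree_def by auto
  then show ?thesis unfolding outdeg_def by (metis (mono_tags) card.empty empty_Collect_eq)
qed

lemma ST_nonret:
  assumes "phylo_net V A X" "support_tree V A X T" "(u, v) \<in> A" "\<not> reticulation V A v"
  shows "(u, v) \<in> T"
proof -
  have v: "v \<in> V" using assms pn_basic(2)[OF assms(1)] by auto
  have nr: "v \<noteq> net_root V A" using root_noin[OF assms(1)] assms(3) by auto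
  have "card {u. (u, v) \<in> A} = 1" using indeg1[OF assms(1) v nr assms(4)] unfolding indeg_def .
  then obtain z where z: "{u. (u, v) \<in> A} = {z}" using card_1_singletonE by blast
  obtain u' where u': "(u', v) \<in> T" using ST_in[OF assms(2) v nr] by auto
  moreover have "T \<subseteq> A" using assms(2) unfolding support_tree_def by auto
  ultimately have "(u', v) \<in> A" by auto
  then have "u' = z" "u = z" using sing_iff[OF z] assms(3) by auto
  then show ?thesis using u' by simp
qed

lemma ST_retpar:
  assumes "phylo_net V A X" "support_tree V A X T" "(u, v) \<in> A" "reticulation V A u"
  shows "(u, v) \<in> T"
proof -
  have u: "u \<in> V" "u \<notin> X" using assms ret_notX[OF assms(1)] unfolding reticulation_def by auto
  obtain w where w: "(u, w) \<in> T" using ST_out[OF assms(1,2) u] by auto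
  have "T \<subseteq> A" using assms(2) unfolding support_tree_def by auto
  then have "w = v" using ret_out[OF assms(4) assms(3)] w by auto
  then show ?thesis using w by simp
qed

lemma ST_retchild:
  assumes "phylo_net V A X" "support_tree V A X T" "reticulation V A v" "v \<notin> R_t V A"
    "(u, v) \<in> T"
  shows "reticulation V A u"
proof -
  obtain p where p: "(p, v) \<in> A" "reticulation V A p" using notR_par[OF assms(3,4)] by metis
  have pT: "(p, v) \<in> T" using ST_retpar[OF assms(1,2) p] .
  have "v \<in> V" using assms(3) unfolding reticulation_def by simp
  then have "\<exists>!u. (u, v) \<in> T" using ST_in[OF assms(2)] ret_notroot[OF assms(1,3)] by simp
  then have "u = p" using pT assms(5) by blast
  then show ?thesis using p by simp
qed

definition Phi :: "('v \<times> 'v) set \<Rightarrow> ('v set \<Rightarrow> 'v set set)" where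
  "Phi T R = {{q, r} | q r. (q, r) \<in> T \<and> r \<in> R}"

definition mkT :: "'v set \<Rightarrow> ('v \<times> 'v) set \<Rightarrow> 'v set set \<Rightarrow> ('v \<times> 'v) set" where
  "mkT V A E = {(u, v). (u, v) \<in> A \<and> (\<not> reticulation V A v \<or>
      (v \<notin> R_t V A \<and> reticulation V A u) \<or> (v \<in> R_t V A \<and> {u, v} \<in> E))}"

lemma char:
  assumes "phylo_net V A X" "support_tree V A X T"
  shows "T = mkT V A (Phi T (R_t V A))"
proof -
  have TA: "T \<subseteq> A" using assms(2) unfolding support_tree_def by auto
  show ?thesis
  proof (rule set_eqI, clarify)
    fix u v
    show "((u, v) \<in> T) = ((u, v) \<in> mkT V A (Phi T (R_t V A)))"
    proof
      assume h: "(u, v) \<in> T"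
      then have "(u, v) \<in> A" using TA by auto
      moreover have "\<not> reticulation V A v \<or> (v \<notin> R_t V A \<and> reticulation V A u) \<or>
          (v \<in> R_t V A \<and> {u, v} \<in> Phi T (R_t V A))"
      proof (cases "reticulation V A v \<and> v \<notin> R_t V A")
        case True
        then show ?thesis using ST_retchild[OF assms True[THEN conjunct1] True[THEN conjunct2] h] by auto
      next
        case False
        then show ?thesis using h unfolding Phi_def by blast
      qed
      ultimately show "(u, v) \<in> mkT V A (Phi T (R_t V A))" unfolding mkT_def by auto
    next
      assume "(u, v) \<in> mkT V A (Phi T (R_t V A))"
      then have a: "(u, v) \<in> A" and c: "\<not> reticulation V A v \<or>
          (v \<notin> R_t V A \<and> reticulation V A u) \<or> (v \<in> R_t V A \<and> {u, v} \<in> Phi T (R_t V A))"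
        unfolding mkT_def by auto
      show "(u, v) \<in> T"
      proof -
        { assume "\<not> reticulation V A v" then have ?thesis using ST_nonret[OF assms a] by auto }
        moreover
        { assume "reticulation V A u" then have ?thesis using ST_retpar[OF assms a] by auto }
        moreover
        { assume v: "v \<in> R_t V A" and e: "{u, v} \<in> Phi T (R_t V A)"
          then obtain q r where qr: "{u, v} = {q, r}" "(q, r) \<in> T" "r \<in> R_t V A"
            unfolding Phi_def by blast
          have ?thesis
          proof (cases "u = q \<and> v = r")
            case True then show ?thesis using qr by auto
          next
            case False
            then have "u = r" "v = q" using qr(1) by (auto simp: doubleton_eq_iff)
            then have "(v, r) \<in> A" "reticulation V A v" using qr TA R_ret[OF v] by auto
            then show ?thesis using qr(3) unfolding R_t_def by auto
          qed }
        ultimately show ?thesis using c by blast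
      qed
    qed
  qed
qed

lemma Phi_supp:
  assumes "phylo_net V A X" "support_tree V A X T"
  shows "supporting_set V A X (Phi T (R_t V A))"
proof -
  have TA: "T \<subseteq> A" using assms(2) unfolding support_tree_def by auto
  have AV: "A \<subseteq> V \<times> V" using pn_basic(2)[OF assms(1)] .
  have 1: "Phi T (R_t V A) \<subseteq> J_edges V A"
  proof
    fix e assume "e \<in> Phi T (R_t V A)"
    then obtain q r where qr: "e = {q, r}" "(q, r) \<in> T" "r \<in> R_t V A" unfolding Phi_def by blast
    then have "(q, r) \<in> A" using TA by auto
    moreover then have "q \<in> Q_t V A" using qr AV unfolding Q_t_def by auto
    ultimately show "e \<in> J_edges V A" using qr unfolding J_edges_def by blast
  qed
  have 2: "\<forall>q \<in> Q_t V A. omnian V A X q \<longrightarrow> (\<exists>e \<in> Phi T (R_t V A). q \<in> e)"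
  proof (intro ballI impI)
    fix q assume q: "q \<in> Q_t V A" and om: "omnian V A X q"
    then have "q \<in> V" "q \<notin> X" unfolding omnian_def by auto
    then obtain c where c: "(q, c) \<in> T" using ST_out[OF assms] by blast
    then have rc: "reticulation V A c" using om TA unfolding omnian_def by auto
    have "c \<in> R_t V A"
    proof (rule ccontr)
      assume "c \<notin> R_t V A"
      then have "reticulation V A q" using ST_retchild[OF assms rc _ c] by auto
      then show False using Q_notret[OF q] by simp
    qed
    then have "{q, c} \<in> Phi T (R_t V A)" using c unfolding Phi_def by blast
    then show "\<exists>e \<in> Phi T (R_t V A). q \<in> e" by blast
  qed
  have 3: "\<forall>r \<in> R_t V A. card {e \<in> Phi T (R_t V A). r \<in> e} = 1"
  proof
    fix r assume r: "r \<in> R_t V A"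
    then have rr: "reticulation V A r" by (rule R_ret)
    then have "r \<in> V" "r \<noteq> net_root V A" using ret_notroot[OF assms(1)]
      unfolding reticulation_def by auto
    then obtain u where u: "(u, r) \<in> T" "\<And>u'. (u', r) \<in> T \<Longrightarrow> u' = u"
      using ST_in[OF assms(2)] by metis
    have "{e \<in> Phi T (R_t V A). r \<in> e} = {{u, r}}"
    proof (rule set_eqI, rule iffI)
      fix e assume "e \<in> {e \<in> Phi T (R_t V A). r \<in> e}"
      then obtain q r' where qr: "e = {q, r'}" "(q, r') \<in> T" "r' \<in> R_t V A" "r \<in> e"
        unfolding Phi_def by blast
      show "e \<in> {{u, r}}"
      proof (cases "r = r'")
        case True then show ?thesis using qr u by auto
      next
        case False
        then have "q = r" using qr by auto
        then have "(r, r') \<in> A" using qr TA by auto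
        then show ?thesis using qr(3) rr unfolding R_t_def by auto
      qed
    next
      fix e assume "e \<in> {{u, r}}"
      then show "e \<in> {e \<in> Phi T (R_t V A). r \<in> e}" using u r unfolding Phi_def by blast
    qed
    then show "card {e \<in> Phi T (R_t V A). r \<in> e} = 1" by simp
  qed
  show ?thesis using 1 2 3 unfolding supporting_set_def by blast
qed

lemma surj_part:
  assumes pn: "phylo_net V A X" and T0: "support_tree V A X T0"
    and E: "supporting_set V A X E"
  shows "support_tree V A X (mkT V A E) \<and> Phi (mkT V A E) (R_t V A) = E"
proof -
  define T where "T = mkT V A E"
  have TA: "T \<subseteq> A" unfolding T_def mkT_def by auto
  have AV: "A \<subseteq> V \<times> V" using pn_basic(2)[OF pn] .
  have finA: "finite A" using pn_basic(3)[OF pn] .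
  have finT: "finite T" using TA finA finite_subset by blast
  have EJ: "E \<subseteq> J_edges V A" using E unfolding supporting_set_def by auto
  have U1: "p1 = p2" if "reticulation V A v" "v \<notin> R_t V A" "reticulation V A p1"
    "reticulation V A p2" "(p1, v) \<in> A" "(p2, v) \<in> A" for v p1 p2
  proof -
    have "(p1, v) \<in> T0" "(p2, v) \<in> T0" using ST_retpar[OF pn T0] that by auto
    moreover have "v \<in> V" using that unfolding reticulation_def by auto
    ultimately show ?thesis using ST_in[OF T0] ret_notroot[OF pn that(1)] by blast
  qed
  have U2: "w \<in> Q_t V A" if W: "w \<in> V" "w \<notin> X" "\<forall>c. (w, c) \<in> A \<longrightarrow> reticulation V A c"
    "\<not> reticulation V A w" for w
  proof -
    obtain c where c: "(w, c) \<in> T0" using ST_out[OF pn T0] W by blast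
    have T0A: "T0 \<subseteq> A" using T0 unfolding support_tree_def by auto
    then have rc: "reticulation V A c" using W c by auto
    have "c \<in> R_t V A"
    proof (rule ccontr)
      assume "c \<notin> R_t V A"
      then show False using ST_retchild[OF pn T0 rc _ c] W by auto
    qed
    then show ?thesis using c T0A W unfolding Q_t_def by auto
  qed
  have inE: "\<exists>q r. e = {q, r} \<and> (q, r) \<in> A \<and> q \<in> Q_t V A \<and> r \<in> R_t V A" if "e \<in> E" for e
    using EJ that unfolding J_edges_def by blast
  have root0: "{u. (u, net_root V A) \<in> T} = {}" using root_noin[OF pn] TA by auto
  have memT: "((u, v) \<in> T) = ((u, v) \<in> A \<and> (\<not> reticulation V A v \<or>
      (v \<notin> R_t V A \<and> reticulation V A u) \<or> (v \<in> R_t V A \<and> {u, v} \<in> E)))" for u v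
    unfolding T_def mkT_def by simp
  have in1: "\<exists>z. {u. (u, v) \<in> T} = {z}" if v: "v \<in> V" "v \<noteq> net_root V A" for v
  proof (cases "reticulation V A v")
    case False
    have "card {u. (u, v) \<in> A} = 1" using indeg1[OF pn v False] unfolding indeg_def .
    then obtain z where z: "{u. (u, v) \<in> A} = {z}" by (metis card_1_singletonE)
    have "{u. (u, v) \<in> T} = {z}"
    proof (rule set_eqI)
      fix u show "(u \<in> {u. (u, v) \<in> T}) = (u \<in> {z})"
        using memT[of u v] False sing_iff[OF z, of u] by simp
    qed
    then show ?thesis by blast
  next
    case rv: True
    show ?thesis
    proof (cases "v \<in> R_t V A")
      case False
      obtain p where p: "(p, v) \<in> A" "reticulation V A p" using notR_par[OF rv False] by metis
      have "{u. (u, v) \<in> T} = {p}"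
      proof (rule set_eqI)
        fix u show "(u \<in> {u. (u, v) \<in> T}) = (u \<in> {p})"
        proof
          assume "u \<in> {u. (u, v) \<in> T}"
          then have "(u, v) \<in> A" "reticulation V A u" using memT[of u v] rv False by simp_all
          then show "u \<in> {p}" using U1[OF rv False _ p(2) _ p(1)] by simp
        next
          assume "u \<in> {p}"
          then show "u \<in> {u. (u, v) \<in> T}" using memT[of u v] p False by simp
        qed
      qed
      then show ?thesis by blast
    next
      case True
      have "card {e \<in> E. v \<in> e} = 1" using E True unfolding supporting_set_def by simp
      then obtain e0 where e0: "{e \<in> E. v \<in> e} = {e0}" by (metis card_1_singletonE)
      have e0iff: "(e \<in> E \<and> v \<in> e) = (e = e0)" for e
        using sing_iff[of "\<lambda>e. e \<in> E \<and> v \<in> e", OF e0] by simp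
      have e0E: "e0 \<in> E" "v \<in> e0" using e0iff[of e0] by simp_all
      then obtain q r where qr: "e0 = {q, r}" "(q, r) \<in> A" "q \<in> Q_t V A" "r \<in> R_t V A"
        using inE by blast
      have "v \<noteq> q" using Q_notret[OF qr(3)] R_ret[OF True] by metis
      then have vr: "v = r" using qr(1) e0E(2) by simp
      have "{u. (u, v) \<in> T} = {q}"
      proof (rule set_eqI, rule iffI)
        fix u assume "u \<in> {u. (u, v) \<in> T}"
        then have u: "(u, v) \<in> A" "{u, v} \<in> E" using memT[of u v] True R_ret[OF True] by simp_all
        then have "{u, v} = e0" using e0iff[of "{u, v}"] by simp
        then have "u = q \<or> u = v" using qr(1) vr by (simp add: doubleton_eq_iff) blast
        moreover have "u \<noteq> v" using u(1) noloop[OF pn] by metis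
        ultimately show "u \<in> {q}" by simp
      next
        fix u assume "u \<in> {q}"
        then have "u = q" by simp
        then show "u \<in> {u. (u, v) \<in> T}" using memT[of u v] qr vr e0E True by simp
      qed
      then show ?thesis by blast
    qed
  qed
  have indeg_ok: "\<forall>v\<in>V - {net_root V A}. indeg T v = 1"
    using in1 unfolding indeg_def by fastforce
  have reach: "\<forall>v\<in>V. (net_root V A, v) \<in> T\<^sup>*"
  proof -
    have wf: "wf A" using finite_acyclic_wf[OF finA pn_basic(5)[OF pn]] .
    have "v \<in> V \<longrightarrow> (net_root V A, v) \<in> T\<^sup>*" for v
    proof (induction v rule: wf_induct[OF wf])
      case (1 v)
      show ?case
      proof
        assume v: "v \<in> V"
        show "(net_root V A, v) \<in> T\<^sup>*"
        proof (cases "v = net_root V A")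
          case True then show ?thesis by simp
        next
          case False
          obtain z where z: "{u. (u, v) \<in> T} = {z}" using in1 v False by blast
          then have zT: "(z, v) \<in> T" by auto
          then have "(z, v) \<in> A" "z \<in> V" using TA AV by auto
          then have "(net_root V A, z) \<in> T\<^sup>*" using 1 by auto
          then show ?thesis using zT by auto
        qed
      qed
    qed
    then show ?thesis by auto
  qed
  have leaves: "{v \<in> V. outdeg T v = 0} = X"
  proof (rule set_eqI, rule iffI)
    fix v assume "v \<in> {v \<in> V. outdeg T v = 0}"
    then have v: "v \<in> V" "outdeg T v = 0" by auto
    show "v \<in> X"
    proof (rule ccontr)
      assume vX: "v \<notin> X"
      have "\<exists>w. (v, w) \<in> T"
      proof (cases "\<exists>c. (v, c) \<in> A \<and> \<not> reticulation V A c")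
        case True then show ?thesis unfolding T_def mkT_def by auto
      next
        case allret: False
        obtain c where c: "(v, c) \<in> A" using nonX_out[OF pn v(1) vX] by auto
        show ?thesis
        proof (cases "reticulation V A v")
          case True
          then have "c \<notin> R_t V A" using c unfolding R_t_def by auto
          then have "(v, c) \<in> T" using c True unfolding T_def mkT_def by auto
          then show ?thesis by blast
        next
          case False
          have ar: "\<forall>c. (v, c) \<in> A \<longrightarrow> reticulation V A c" using allret by auto
          have q: "v \<in> Q_t V A" using U2[OF v(1) vX ar False] .
          have "omnian V A X v" using v vX ar unfolding omnian_def by auto
          then obtain e where e: "e \<in> E" "v \<in> e" using E q unfolding supporting_set_def by blast
          then obtain q r where qr: "e = {q, r}" "(q, r) \<in> A" "q \<in> Q_t V A" "r \<in> R_t V A"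
            using inE by blast
          have "v \<noteq> r" using R_ret[OF qr(4)] False by auto
          then have "v = q" using qr e by auto
          then have "(v, r) \<in> T" using qr e R_ret[OF qr(4)] unfolding T_def mkT_def by auto
          then show ?thesis by blast
        qed
      qed
      then have "{w. (v, w) \<in> T} \<noteq> {}" by auto
      then have "outdeg T v \<noteq> 0" using fin_out[OF finT] unfolding outdeg_def by auto
      then show False using v by simp
    qed
  next
    fix x assume x: "x \<in> X"
    then have "{w. (x, w) \<in> T} = {}" using X_out[OF pn x] TA by auto
    then show "x \<in> {v \<in> V. outdeg T v = 0}" using x pn_basic(4)[OF pn]
      unfolding outdeg_def by auto
  qed
  have st: "support_tree V A X T"
    unfolding support_tree_def
    using TA root0 indeg_ok reach leaves unfolding indeg_def by auto
  have ph: "Phi T (R_t V A) = E"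
  proof (rule set_eqI, rule iffI)
    fix e assume "e \<in> Phi T (R_t V A)"
    then obtain q r where qr: "e = {q, r}" "(q, r) \<in> T" "r \<in> R_t V A" unfolding Phi_def by blast
    then show "e \<in> E" using R_ret[OF qr(3)] unfolding T_def mkT_def by auto
  next
    fix e assume e: "e \<in> E"
    then obtain q r where qr: "e = {q, r}" "(q, r) \<in> A" "q \<in> Q_t V A" "r \<in> R_t V A"
      using inE by blast
    then have "(q, r) \<in> T" using e unfolding T_def mkT_def by auto
    then show "e \<in> Phi T (R_t V A)" using qr unfolding Phi_def by blast
  qed
  show ?thesis using st ph unfolding T_def by simp
qed

theorem corollary1:
  fixes V :: "'v set" and A :: "('v \<times> 'v) set" and X :: "'v set"
  assumes "phylo_net V A X" and "tree_based V A X"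
  shows "card (SupTrees V A X) = card {E. supporting_set V A X E}"
proof -
  obtain T0 where T0: "support_tree V A X T0" using assms(2) unfolding tree_based_def by blast
  have "bij_betw (\<lambda>T. Phi T (R_t V A)) (SupTrees V A X) {E. supporting_set V A X E}"
  proof (rule bij_betw_imageI)
    show "inj_on (\<lambda>T. Phi T (R_t V A)) (SupTrees V A X)"
      unfolding inj_on_def SupTrees_def using char[OF assms(1)] by (metis mem_Collect_eq)
    show "(\<lambda>T. Phi T (R_t V A)) ` SupTrees V A X = {E. supporting_set V A X E}"
    proof
      show "(\<lambda>T. Phi T (R_t V A)) ` SupTrees V A X \<subseteq> {E. supporting_set V A X E}"
        unfolding SupTrees_def using Phi_supp[OF assms(1)] by auto
      show "{E. supporting_set V A X E} \<subseteq> (\<lambda>T. Phi T (R_t V A)) ` SupTrees V A X"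
      proof
        fix E assume "E \<in> {E. supporting_set V A X E}"
        then have "supporting_set V A X E" by simp
        from surj_part[OF assms(1) T0 this] show "E \<in> (\<lambda>T. Phi T (R_t V A)) ` SupTrees V A X"
          unfolding SupTrees_def by (metis (mono_tags, lifting) image_eqI mem_Collect_eq)
      qed
    qed
  qed
  then show ?thesis by (rule bij_betw_same_card)
qed

end
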